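(* Let $f:\mathbb{R}^n\to\mathbb{R}$ be a continuously differentiable convex function. Let $H$ be a diagonal matrix with nonnegative diagonal entries such that $f(y)\le f(x)+\nabla f(x)^T(y-x)+\tfrac12\|y-x\|_H^2$ for all $x,y\in\mathbb{R}^n$, and let $D$ be a diagonal matrix with $D\succ H$. Let $(x_k)$ be a sequence generated by the IWHT method with $D$, and assume $(x_k)$ has a limit point $\bar x$. Then the entire sequence $(x_k)$ converges to $\bar x$.
   Context: $\|z\|_A^2=z^TAz$. $C_s=\{x\in\mathbb{R}^n:\|x\|_0\le s\}$ for a positive integer $s$, where $\|x\|_0$ is the number of nonzero entries. $\mathcal{P}_{C_s}(z)=\operatorname{argmin}_{y\in C_s}\|y-z\|_2^2$ (set-valued). IWHT with diagonal $D\succ0$: start from $x_0\in C_s$; for $k\ge0$ pick $y_{k+1}\in\mathcal{P}_{C_s}\big(D^{1/2}x_k-D^{-1/2}\nabla f(x_k)\big)$ and set $x_{k+1}=D^{-1/2}y_{k+1}$. *)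

theory Defs
  imports "HOL-Analysis.Analysis"
begin

definition is_diag :: "real^'n^'n \<Rightarrow> bool" where
  "is_diag A \<longleftrightarrow> (\<forall>i j. i \<noteq> j \<longrightarrow> A$i$j = 0)"

definition qnorm2 :: "real^'n^'n \<Rightarrow> real^'n \<Rightarrow> real" where
  "qnorm2 A z = z \<bullet> (A *v z)"

text \<open>Positive definiteness (Loewner order A \<succ> B means A - B positive definite).\<close>
definition pos_def :: "real^'n^'n \<Rightarrow> bool" where
  "pos_def A \<longleftrightarrow> (\<forall>z. z \<noteq> 0 \<longrightarrow> z \<bullet> (A *v z) > 0)"

definition diag_sqrt :: "real^'n^'n \<Rightarrow> real^'n^'n" where
  "diag_sqrt D = (\<chi> i j. if i = j then sqrt (D$i$i) else 0)"

definition diag_inv_sqrt :: "real^'n^'n \<Rightarrow> real^'n^'n" where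
  "diag_inv_sqrt D = (\<chi> i j. if i = j then 1 / sqrt (D$i$i) else 0)"

definition l0 :: "real^'n \<Rightarrow> nat" where
  "l0 x = card {i. x$i \<noteq> 0}"

definition sparse_set :: "nat \<Rightarrow> (real^'n) set" where
  "sparse_set s = {x. l0 x \<le> s}"

definition proj_sparse :: "nat \<Rightarrow> real^'n \<Rightarrow> (real^'n) set" where
  "proj_sparse s z = {y \<in> sparse_set s. \<forall>y' \<in> sparse_set s. (norm (y - z))^2 \<le> (norm (y' - z))^2}"

definition iwht_seq :: "nat \<Rightarrow> real^'n^'n \<Rightarrow> (real^'n \<Rightarrow> real^'n) \<Rightarrow> (nat \<Rightarrow> real^'n) \<Rightarrow> bool" where
  "iwht_seq s D g x \<longleftrightarrow> x 0 \<in> sparse_set s \<and>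
     (\<forall>k. \<exists>y \<in> proj_sparse s (diag_sqrt D *v x k - diag_inv_sqrt D *v g (x k)).
            x (Suc k) = diag_inv_sqrt D *v y)"

end

theory Submission
  imports Defs
begin


lemma tangent:
  fixes f :: "real^'n \<Rightarrow> real"
  assumes conv: "convex_on UNIV f"
    and grad: "\<And>z. (f has_derivative (\<lambda>h. grad z \<bullet> h)) (at z)"
  shows "f c + grad c \<bullet> (x - c) \<le> f x"
proof -
  define h where "h t = f (c + t *\<^sub>R (x - c))" for t :: real
  have hc: "convex_on UNIV h"
  proof (rule convex_onI)
    fix t u v :: real assume "t > 0" "t < 1"
    have "c + ((1 - t) *\<^sub>R u + t *\<^sub>R v) *\<^sub>R (x - c) = (1 - t) *\<^sub>R (c + u *\<^sub>R (x - c)) + t *\<^sub>R (c + v *\<^sub>R (x - c))"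
      by (simp add: algebra_simps)
    then show "h ((1 - t) *\<^sub>R u + t *\<^sub>R v) \<le> (1 - t) * h u + t * h v"
      unfolding h_def using convex_onD[OF conv, of t] \<open>t > 0\<close> \<open>t < 1\<close> by simp
  qed simp
  have d1: "((\<lambda>t. c + t *\<^sub>R (x - c)) has_derivative (\<lambda>t. t *\<^sub>R (x - c))) (at 0)"
    by (auto intro!: derivative_eq_intros)
  have d2: "(f has_derivative (\<lambda>k. grad c \<bullet> k)) (at (c + 0 *\<^sub>R (x - c)))"
    using grad[of c] by simp
  have "(h has_derivative (\<lambda>t. grad c \<bullet> (t *\<^sub>R (x - c)))) (at 0)"
    unfolding h_def using has_derivative_compose[OF d1 d2] by (simp add: o_def)
  moreover have "(\<lambda>t. grad c \<bullet> (t *\<^sub>R (x - c))) = (*) (grad c \<bullet> (x - c))"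
    by (auto simp: fun_eq_iff)
  ultimately have "(h has_field_derivative (grad c \<bullet> (x - c))) (at 0)"
    unfolding has_field_derivative_def by simp
  then have "h 1 - h 0 \<ge> (grad c \<bullet> (x - c)) * (1 - 0)"
    by (intro convex_on_imp_above_tangent[OF hc]) auto
  then show ?thesis unfolding h_def by simp
qed



lemma diag_mv: "is_diag A \<Longrightarrow> (A *v z) $ i = A$i$i * z$i"
proof -
  assume d: "is_diag A"
  have "(A *v z) $ i = (\<Sum>j\<in>UNIV. A$i$j * z$j)" by (simp add: matrix_vector_mult_def)
  also have "\<dots> = (\<Sum>j\<in>UNIV. if j = i then A$i$i * z$i else 0)"
    by (rule sum.cong) (use d in \<open>auto simp: is_diag_def\<close>)
  finally show ?thesis by simp
qed

lemma qnorm2_diag: "is_diag A \<Longrightarrow> qnorm2 A z = (\<Sum>i\<in>UNIV. A$i$i * (z$i)^2)"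
  by (simp add: qnorm2_def inner_vec_def diag_mv power2_eq_square algebra_simps)

lemma diag_diff: "is_diag A \<Longrightarrow> is_diag B \<Longrightarrow> is_diag (A - B)"
  by (simp add: is_diag_def)

lemma sqrt_mv: "(diag_sqrt D *v v) $ i = sqrt (D$i$i) * v$i"
proof -
  have "is_diag (diag_sqrt D)" by (simp add: is_diag_def diag_sqrt_def)
  from diag_mv[OF this] show ?thesis by (simp add: diag_sqrt_def)
qed

lemma isqrt_mv: "(diag_inv_sqrt D *v v) $ i = v$i / sqrt (D$i$i)"
proof -
  have "is_diag (diag_inv_sqrt D)" by (simp add: is_diag_def diag_inv_sqrt_def)
  from diag_mv[OF this] show ?thesis by (simp add: diag_inv_sqrt_def)
qed

lemma norm_sq_vec: "(norm (v::real^'n))^2 = (\<Sum>j\<in>UNIV. (v$j)^2)"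
  unfolding power2_norm_eq_inner inner_vec_def by (simp add: power2_eq_square)

lemma qnorm2_diff: "qnorm2 (A - B) z = qnorm2 A z - qnorm2 B z"
  by (simp add: qnorm2_def matrix_vector_mult_diff_rdistrib inner_diff_right)

lemma proj_coord:
  assumes w: "w \<in> proj_sparse s z" and wi: "w$i \<noteq> 0"
  shows "w$i = z$i"
proof (rule ccontr)
  assume ne: "w$i \<noteq> z$i"
  define w' where "w' = (\<chi> j. if j = i then z$i else w$j)"
  have "{j. w'$j \<noteq> 0} \<subseteq> {j. w$j \<noteq> 0}" using wi by (auto simp: w'_def)
  then have "l0 w' \<le> l0 w" unfolding l0_def by (intro card_mono) auto
  moreover have "w \<in> sparse_set s" using w by (simp add: proj_sparse_def)
  ultimately have "w' \<in> sparse_set s" by (simp add: sparse_set_def)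
  with w have le: "(norm (w - z))^2 \<le> (norm (w' - z))^2" by (simp add: proj_sparse_def)
  have "(norm (w - z))^2 = (\<Sum>j\<in>UNIV. ((w - z)$j)^2)"
    by (rule norm_sq_vec)
  also have "\<dots> = (\<Sum>j\<in>UNIV. ((w' - z)$j)^2 + (if j = i then (w$i - z$i)^2 else 0))"
    by (rule sum.cong) (auto simp: w'_def)
  also have "\<dots> = (\<Sum>j\<in>UNIV. ((w' - z)$j)^2) + (w$i - z$i)^2"
    by (simp add: sum.distrib)
  also have "(\<Sum>j\<in>UNIV. ((w' - z)$j)^2) = (norm (w' - z))^2"
    by (rule norm_sq_vec[symmetric])
  finally have "(norm (w - z))^2 = (norm (w' - z))^2 + (w$i - z$i)^2" .
  moreover have "(w$i - z$i)^2 > 0" using ne by simp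
  ultimately show False using le by linarith
qed

lemma pythag:
  assumes w: "w \<in> proj_sparse s z" and supp: "\<And>i. u$i \<noteq> 0 \<Longrightarrow> w$i \<noteq> 0"
  shows "(norm (z - u))^2 = (norm (z - w))^2 + (norm (w - u))^2"
proof -
  have "(norm (z - u))^2 = (\<Sum>j\<in>UNIV. ((z - u)$j)^2)"
    by (rule norm_sq_vec)
  also have "\<dots> = (\<Sum>j\<in>UNIV. ((z - w)$j)^2 + ((w - u)$j)^2)"
  proof (rule sum.cong)
    fix j :: 'a
    show "((z - u)$j)^2 = ((z - w)$j)^2 + ((w - u)$j)^2"
    proof (cases "w$j = 0")
      case True then have "u$j = 0" using supp[of j] by auto
      with True show ?thesis by simp
    next
      case False then show ?thesis using proj_coord[OF w False] by simp
    qed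
  qed simp
  also have "\<dots> = (norm (z - w))^2 + (norm (w - u))^2"
    by (simp add: sum.distrib norm_sq_vec)
  finally show ?thesis .
qed



lemma sq_add_inner: "(norm (a + b :: 'a::real_inner))^2 = (norm a)^2 + 2*(a \<bullet> b) + (norm b)^2"
  by (simp add: power2_norm_eq_inner inner_add_left inner_add_right inner_commute)

lemma sq_diff_inner: "(norm (a - b :: 'a::real_inner))^2 = (norm a)^2 - 2*(a \<bullet> b) + (norm b)^2"
  by (simp add: power2_norm_eq_inner inner_diff_left inner_diff_right inner_commute)

context
  fixes D :: "real^'n^'n"
  assumes dpos: "\<And>i. D$i$i > 0"
begin

lemma QP: "diag_inv_sqrt D *v (diag_sqrt D *v v) = v"
  using dpos by (simp add: vec_eq_iff sqrt_mv isqrt_mv) (metis less_numeral_extra(3) nonzero_mult_div_cancel_left real_sqrt_eq_zero_cancel_iff)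

lemma PQ: "diag_sqrt D *v (diag_inv_sqrt D *v v) = v"
  using dpos by (simp add: vec_eq_iff sqrt_mv isqrt_mv) (metis less_irrefl)

lemma inner_PQ: "(diag_sqrt D *v u) \<bullet> (diag_inv_sqrt D *v v) = u \<bullet> v"
  unfolding inner_vec_def
proof (rule sum.cong)
  fix i :: 'n
  have "sqrt (D$i$i) \<noteq> 0" using dpos[of i] by simp
  then show "(diag_sqrt D *v u) $ i \<bullet> (diag_inv_sqrt D *v v) $ i = u $ i \<bullet> v $ i"
    by (simp add: sqrt_mv isqrt_mv)
qed simp

lemma normP: "is_diag D \<Longrightarrow> (norm (diag_sqrt D *v u))^2 = qnorm2 D u"
  unfolding norm_sq_vec qnorm2_diag
  by (rule sum.cong) (use dpos in \<open>auto simp: sqrt_mv power_mult_distrib less_imp_le\<close>)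

lemma l0P: "l0 (diag_sqrt D *v v) = l0 v"
  unfolding l0_def using dpos by (simp add: sqrt_mv) (metis less_irrefl)

lemma l0Q: "l0 (diag_inv_sqrt D *v v) = l0 v"
  unfolding l0_def using dpos by (simp add: isqrt_mv) (metis less_irrefl)

lemma expand_plus: "(norm (diag_sqrt D *v u + diag_inv_sqrt D *v v))^2
   = (norm (diag_sqrt D *v u))^2 + 2*(u \<bullet> v) + (norm (diag_inv_sqrt D *v v))^2"
  by (simp add: sq_add_inner inner_PQ)

lemma expand_minus: "(norm (diag_sqrt D *v u - diag_inv_sqrt D *v v))^2
   = (norm (diag_sqrt D *v u))^2 - 2*(u \<bullet> v) + (norm (diag_inv_sqrt D *v v))^2"
  by (simp add: sq_diff_inner inner_PQ)

end



theorem theorem4p8: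
  fixes f :: "real^'n \<Rightarrow> real"
    and grad :: "real^'n \<Rightarrow> real^'n"
    and H D :: "real^'n^'n"
    and s :: nat
    and x :: "nat \<Rightarrow> real^'n"
    and xbar :: "real^'n"
  assumes s_pos: "s > 0"
    and grad: "\<And>z. (f has_derivative (\<lambda>h. grad z \<bullet> h)) (at z)"
    and grad_cont: "continuous_on UNIV grad"
    and conv: "convex_on UNIV f"
    and H_diag: "is_diag H"
    and H_nonneg: "\<And>i. H$i$i \<ge> 0"
    and descent: "\<And>u v. f v \<le> f u + grad u \<bullet> (v - u) + 1/2 * qnorm2 H (v - u)"
    and D_diag: "is_diag D"
    and D_gt_H: "pos_def (D - H)"
    and iwht: "iwht_seq s D grad x"
    and limpt: "\<exists>r. strict_mono r \<and> (x \<circ> r) \<longlonglongrightarrow> xbar"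
  shows "x \<longlonglongrightarrow> xbar"
proof -
  have DH_diag: "is_diag (D - H)" using D_diag H_diag by (rule diag_diff)
  have qDH_nonneg: "qnorm2 (D - H) v \<ge> 0" for v
    using D_gt_H unfolding pos_def_def qnorm2_def
    by (cases "v = 0") (auto intro: less_imp_le)
  have DH_pos: "D$i$i - H$i$i > 0" for i
  proof -
    have "qnorm2 (D - H) (axis i 1) > 0"
      using D_gt_H unfolding pos_def_def qnorm2_def by (simp add: axis_eq_0_iff)
    moreover have "qnorm2 (D - H) (axis i 1) = (D - H)$i$i"
      unfolding qnorm2_diag[OF DH_diag]
      by (subst sum.remove[of _ i]) (auto simp: axis_def)
    ultimately show ?thesis by simp
  qed
  have dpos: "D$i$i > 0" for i using DH_pos[of i] H_nonneg[of i] by linarith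
  define P where "P = diag_sqrt D"
  define Q where "Q = diag_inv_sqrt D"
  from iwht have "\<forall>k. \<exists>w. w \<in> proj_sparse s (P *v x k - Q *v grad (x k)) \<and> x (Suc k) = Q *v w"
    unfolding iwht_seq_def P_def Q_def by blast
  then obtain w where w: "\<And>k. w k \<in> proj_sparse s (P *v x k - Q *v grad (x k))"
      and xS: "\<And>k. x (Suc k) = Q *v w k"
    by metis
  have x0: "x 0 \<in> sparse_set s" using iwht by (simp add: iwht_seq_def)
  define y where "y k = P *v x k" for k
  define ub where "ub = P *v xbar"
  define G where "G k = Q *v grad (x k)" for k
  define e where "e k = norm (y k - ub)" for k
  have yS: "y (Suc k) = w k" for k
    unfolding y_def xS P_def Q_def using PQ[OF dpos] .
  have xsp: "x k \<in> sparse_set s" for k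
  proof (cases k)
    case 0 then show ?thesis using x0 by simp
  next
    case (Suc m)
    have "w m \<in> sparse_set s" using w[of m] by (simp add: proj_sparse_def)
    then show ?thesis unfolding Suc xS Q_def sparse_set_def using l0Q[OF dpos] by simp
  qed
  have ysp: "y k \<in> sparse_set s" for k
    using xsp[of k] unfolding y_def P_def sparse_set_def using l0P[OF dpos] by simp
  have Pdiff: "P *v (a - b) = P *v a - P *v b" for a b by (simp add: matrix_vector_mult_diff_distrib)
  have normP': "(norm (P *v u))^2 = qnorm2 D u" for u
    unfolding P_def using normP[OF dpos D_diag] .
  have eq: "(e k)^2 = qnorm2 D (x k - xbar)" for k
    unfolding e_def y_def ub_def Pdiff[symmetric] normP' ..
  have expP: "(norm (P *v u + Q *v v))^2 = (norm (P *v u))^2 + 2*(u \<bullet> v) + (norm (Q *v v))^2" for u v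
    unfolding P_def Q_def by (rule expand_plus[OF dpos])
  have expM: "(norm (P *v u - Q *v v))^2 = (norm (P *v u))^2 - 2*(u \<bullet> v) + (norm (Q *v v))^2" for u v
    unfolding P_def Q_def by (rule expand_minus[OF dpos])
  have opt: "(norm (y (Suc k) - (y k - G k)))^2 \<le> (norm (v - (y k - G k)))^2"
    if "v \<in> sparse_set s" for k v
    using w[of k] that unfolding yS unfolding G_def y_def proj_sparse_def by blast
  have dec: "f (x (Suc k)) \<le> f (x k) - 1/2 * qnorm2 (D - H) (x (Suc k) - x k)" for k
  proof -
    let ?d = "x (Suc k) - x k"
    have "(norm (P *v ?d + Q *v grad (x k)))^2 \<le> (norm (Q *v grad (x k)))^2"
      using opt[OF ysp[of k], of k] unfolding y_def G_def Pdiff by (simp add: algebra_simps)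
    then have "qnorm2 D ?d + 2 * (?d \<bullet> grad (x k)) \<le> 0"
      unfolding expP normP' by simp
    moreover have "f (x (Suc k)) \<le> f (x k) + grad (x k) \<bullet> ?d + 1/2 * qnorm2 H ?d"
      using descent .
    moreover have "?d \<bullet> grad (x k) = grad (x k) \<bullet> ?d" by (rule inner_commute)
    ultimately have "f (x (Suc k)) \<le> f (x k) - qnorm2 D ?d / 2 + qnorm2 H ?d / 2"
      by linarith
    then show ?thesis unfolding qnorm2_diff by (simp add: field_simps)
  qed
  have decseq: "decseq (\<lambda>k. f (x k))"
  proof (rule decseq_SucI)
    fix n show "f (x (Suc n)) \<le> f (x n)"
      using dec[of n] qDH_nonneg[of "x (Suc n) - x n"] by linarith
  qed
  obtain r where r: "strict_mono r" "(x \<circ> r) \<longlonglongrightarrow> xbar" using limpt by blast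
  have fcont: "continuous_on UNIV f"
    using grad has_derivative_continuous by (blast intro: continuous_at_imp_continuous_on)
  have flim: "(\<lambda>j. f (x (r j))) \<longlonglongrightarrow> f xbar"
    using continuous_on_tendsto_compose[OF fcont r(2)] by (simp add: o_def)
  have fge: "f xbar \<le> f (x k)" for k
  proof (rule LIMSEQ_le_const2[OF flim])
    show "\<exists>N. \<forall>j\<ge>N. f (x (r j)) \<le> f (x k)"
      using decseq seq_suble[OF r(1)] by (metis decseqD le_trans)
  qed

  have ylim: "(\<lambda>j. y (r j)) \<longlonglongrightarrow> ub"
    unfolding y_def ub_def
    using isCont_tendsto_compose[OF matrix_vector_mult_linear_continuous_at r(2)]
    by (simp add: o_def)
  have ubsp: "ub \<in> sparse_set s"
  proof -
    have "eventually (\<lambda>j. ub$i \<noteq> 0 \<longrightarrow> y (r j) $ i \<noteq> 0) sequentially" for i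
    proof (cases "ub$i = 0")
      case False
      have "(\<lambda>j. y (r j) $ i) \<longlonglongrightarrow> ub$i" using ylim by (rule tendsto_vec_nth)
      from tendsto_imp_eventually_ne[OF this False] show ?thesis by (rule eventually_mono) simp
    qed simp
    then have "eventually (\<lambda>j. \<forall>i. ub$i \<noteq> 0 \<longrightarrow> y (r j) $ i \<noteq> 0) sequentially"
      by (rule eventually_all_finite)
    then obtain N where "\<forall>i. ub$i \<noteq> 0 \<longrightarrow> y (r N) $ i \<noteq> 0"
      unfolding eventually_sequentially by blast
    then have "{i. ub$i \<noteq> 0} \<subseteq> {i. y (r N) $ i \<noteq> 0}" by auto
    then have "l0 ub \<le> l0 (y (r N))" unfolding l0_def by (intro card_mono) auto
    then show ?thesis using ysp[of "r N"] by (simp add: sparse_set_def)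
  qed
  have eP: "(norm (P *v (xbar - x k)))^2 = (e k)^2" for k
    unfolding e_def y_def ub_def by (simp add: Pdiff norm_minus_commute)
  have dP: "(norm (P *v (x k - x (Suc k))))^2 = qnorm2 D (x (Suc k) - x k)" for k
    by (metis Pdiff norm_minus_commute normP')
  have E3: "qnorm2 (D - H) (x (Suc k) - x k) \<le> (e k)^2" for k
  proof -
    let ?d = "x (Suc k) - x k"
    let ?g = "grad (x k)"
    have "y (Suc k) - (y k - G k) = P *v ?d + Q *v ?g"
      unfolding y_def G_def Pdiff by simp
    moreover have "ub - (y k - G k) = P *v (xbar - x k) + Q *v ?g"
      unfolding y_def G_def ub_def Pdiff by simp
    ultimately have "(norm (P *v ?d + Q *v ?g))^2 \<le> (norm (P *v (xbar - x k) + Q *v ?g))^2"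
      using opt[OF ubsp, of k] by simp
    then have o: "qnorm2 D ?d + 2 * (?d \<bullet> ?g) \<le> (e k)^2 + 2 * ((xbar - x k) \<bullet> ?g)"
      unfolding expP normP'[of ?d] eP by simp
    have cv: "f (x k) + ?g \<bullet> (xbar - x k) \<le> f xbar" by (rule tangent[OF conv grad])
    have ds: "f (x (Suc k)) \<le> f (x k) + ?g \<bullet> ?d + 1/2 * qnorm2 H ?d" by (rule descent)
    have c1: "?d \<bullet> ?g = ?g \<bullet> ?d" "(xbar - x k) \<bullet> ?g = ?g \<bullet> (xbar - x k)" by (simp_all add: inner_commute)
    have "qnorm2 D ?d - qnorm2 H ?d \<le> (e k)^2"
      using o cv ds c1 fge[of "Suc k"] by linarith
    then show ?thesis unfolding qnorm2_diff .
  qed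
  have E4: "e (Suc k) \<le> e k" if supp: "\<And>i. ub$i \<noteq> 0 \<Longrightarrow> y (Suc k) $ i \<noteq> 0" for k
  proof -
    let ?d = "x (Suc k) - x k"
    let ?g = "grad (x k)"
    have py: "(norm ((y k - G k) - ub))^2 = (norm ((y k - G k) - w k))^2 + (norm (w k - ub))^2"
    proof -
      have sw: "w k $ i \<noteq> 0" if "ub$i \<noteq> 0" for i using supp[OF that] yS[of k] by simp
      have z: "P *v x k - Q *v grad (x k) = y k - G k" by (simp add: y_def G_def)
      show ?thesis using pythag[OF w[of k] sw] unfolding z .
    qed
    have eq1: "(y k - G k) - ub = P *v (x k - xbar) - Q *v ?g"
      unfolding y_def G_def ub_def Pdiff by simp
    have eq2: "(y k - G k) - w k = P *v (x k - x (Suc k)) - Q *v ?g"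
      unfolding yS[symmetric] y_def G_def Pdiff by simp
    have eq3: "norm (w k - ub) = e (Suc k)" using yS unfolding e_def by simp
    have py2: "(norm (P *v (x k - xbar) - Q *v ?g))^2 = (norm (P *v (x k - x (Suc k)) - Q *v ?g))^2 + (e (Suc k))^2"
      using py unfolding eq1 eq2 eq3 .
    have "(norm (P *v (x k - xbar)))^2 - 2 * ((x k - xbar) \<bullet> ?g)
        = (norm (P *v (x k - x (Suc k))))^2 - 2 * ((x k - x (Suc k)) \<bullet> ?g) + (e (Suc k))^2"
      using py2 unfolding expM by linarith
    moreover have "(norm (P *v (x k - xbar)))^2 = (e k)^2"
      unfolding e_def y_def ub_def Pdiff ..
    ultimately have o: "(e k)^2 - 2 * ((x k - xbar) \<bullet> ?g)
        = qnorm2 D ?d - 2 * ((x k - x (Suc k)) \<bullet> ?g) + (e (Suc k))^2"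
      unfolding dP by simp
    have cv: "f (x k) + ?g \<bullet> (xbar - x k) \<le> f xbar" by (rule tangent[OF conv grad])
    have ds: "f (x (Suc k)) \<le> f (x k) + ?g \<bullet> ?d + 1/2 * qnorm2 H ?d" by (rule descent)
    have c1: "(x k - xbar) \<bullet> ?g = - (?g \<bullet> (xbar - x k))" "(x k - x (Suc k)) \<bullet> ?g = - (?g \<bullet> ?d)"
      by (simp_all add: inner_commute inner_diff_left inner_diff_right)
    have "(e (Suc k))^2 \<le> (e k)^2"
      using o cv ds c1 fge[of "Suc k"] qDH_nonneg[of ?d] unfolding qnorm2_diff by linarith
    then show ?thesis by (rule power2_le_imp_le) (simp add: e_def)
  qed
  define c where "c = Min (range (\<lambda>i. (D$i$i - H$i$i) / D$i$i))"
  have cpos: "c > 0" unfolding c_def using DH_pos dpos by (simp add: Min_gr_iff)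
  have cle: "c * D$i$i \<le> D$i$i - H$i$i" for i
  proof -
    have "c \<le> (D$i$i - H$i$i) / D$i$i" unfolding c_def by (rule Min_le) auto
    then show ?thesis using dpos[of i] by (simp add: pos_le_divide_eq)
  qed
  have cq: "c * qnorm2 D v \<le> qnorm2 (D - H) v" for v
  proof -
    have "c * qnorm2 D v = (\<Sum>i\<in>UNIV. (c * D$i$i) * (v$i)^2)"
      unfolding qnorm2_diag[OF D_diag] sum_distrib_left by (simp add: mult.assoc)
    also have "\<dots> \<le> (\<Sum>i\<in>UNIV. (D$i$i - H$i$i) * (v$i)^2)"
      by (rule sum_mono) (use cle in \<open>auto intro: mult_right_mono\<close>)
    also have "\<dots> = qnorm2 (D - H) v" unfolding qnorm2_diag[OF DH_diag] by simp
    finally show ?thesis .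
  qed
  define K where "K = 1 + 1 / c"
  have Kpos: "K > 0"
  proof -
    have "1 / c > 0" using cpos by simp
    then show ?thesis unfolding K_def by linarith
  qed
  have step: "norm (y (Suc k) - y k) \<le> K * e k" for k
  proof -
    have "(norm (y (Suc k) - y k))^2 = qnorm2 D (x (Suc k) - x k)"
      unfolding y_def Pdiff[symmetric] normP' ..
    also have "\<dots> \<le> (e k)^2 / c"
    proof -
      have "c * qnorm2 D (x (Suc k) - x k) \<le> (e k)^2"
        using cq[of "x (Suc k) - x k"] E3[of k] by (rule order_trans)
      then show ?thesis using cpos by (simp add: pos_le_divide_eq algebra_simps)
    qed
    also have "\<dots> \<le> (K * e k)^2"
    proof -
      have t: "t \<le> (1 + t)^2" if "t > 0" for t :: real
      proof -
        have "(1 + t)^2 = 1 + 2*t + t*t" by (simp add: power2_eq_square algebra_simps)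
        moreover have "t*t \<ge> 0" by simp
        ultimately show ?thesis using that by linarith
      qed
      have "1 / c \<le> K^2" unfolding K_def by (rule t) (use cpos in simp)
      then have "(e k)^2 * (1 / c) \<le> (e k)^2 * K^2" by (intro mult_left_mono) auto
      then show ?thesis by (simp add: power_mult_distrib mult.commute)
    qed
    finally show ?thesis by (rule power2_le_imp_le) (use Kpos in \<open>simp add: e_def\<close>)
  qed
  define \<delta> where "\<delta> = Min (insert 1 ((\<lambda>i. \<bar>ub$i\<bar>) ` {i. ub$i \<noteq> 0}))"
  have \<delta>pos: "\<delta> > 0" unfolding \<delta>_def by (simp add: Min_gr_iff)
  have supp_near: "v$i \<noteq> 0" if "norm (v - ub) < \<delta>" "ub$i \<noteq> 0" for v i
  proof
    assume "v$i = 0"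
    have "\<delta> \<le> \<bar>ub$i\<bar>" unfolding \<delta>_def using that(2) by (intro Min_le) auto
    moreover have "\<bar>(v - ub)$i\<bar> \<le> norm (v - ub)" by (rule component_le_norm_cart)
    ultimately show False using that(1) \<open>v$i = 0\<close> by simp
  qed
  have erlim: "(\<lambda>j. e (r j)) \<longlonglongrightarrow> 0"
    unfolding e_def using tendsto_norm_zero[OF LIM_zero[OF ylim]] .
  have e0: "e \<longlonglongrightarrow> 0"
  proof (rule LIMSEQ_I)
    fix \<epsilon> :: real assume "\<epsilon> > 0"
    define \<rho> where "\<rho> = min \<epsilon> (\<delta> / (1 + K))"
    have \<rho>pos: "\<rho> > 0" unfolding \<rho>_def using \<open>\<epsilon> > 0\<close> \<delta>pos Kpos by simp
    obtain j where ej: "norm (e (r j) - 0) < \<rho>" using LIMSEQ_D[OF erlim \<rho>pos] by blast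
    define m where "m = r j"
    have em: "e m < \<rho>" using ej unfolding m_def e_def by simp
    have mono: "e (m + n) \<le> e m" for n
    proof (induction n)
      case 0 then show ?case by simp
    next
      case (Suc n)
      have en: "e (m + n) < \<rho>" using Suc em by linarith
      have "norm (y (Suc (m + n)) - ub) \<le> norm (y (Suc (m + n)) - y (m + n)) + e (m + n)"
        unfolding e_def using norm_triangle_ineq[of "y (Suc (m+n)) - y (m+n)" "y (m+n) - ub"] by simp
      also have "\<dots> \<le> (1 + K) * e (m + n)" using step[of "m + n"] by (simp add: algebra_simps)
      also have "\<dots> < (1 + K) * \<rho>" using en Kpos by simp
      also have "\<dots> \<le> \<delta>" unfolding \<rho>_def using Kpos
        by (simp add: min_def pos_le_divide_eq mult.commute)
      finally have "\<And>i. ub$i \<noteq> 0 \<Longrightarrow> y (Suc (m + n)) $ i \<noteq> 0" using supp_near by blast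
      then have "e (Suc (m + n)) \<le> e (m + n)" by (rule E4)
      then show ?case using Suc by simp
    qed
    show "\<exists>N. \<forall>n\<ge>N. norm (e n - 0) < \<epsilon>"
    proof (intro exI allI impI)
      fix n assume "n \<ge> m"
      then have "e n \<le> e m" using mono[of "n - m"] by simp
      moreover have "e n \<ge> 0" by (simp add: e_def)
      ultimately show "norm (e n - 0) < \<epsilon>" using em unfolding \<rho>_def by simp
    qed
  qed
  have "(\<lambda>k. y k - ub) \<longlonglongrightarrow> 0"
    using e0 unfolding e_def tendsto_norm_zero_iff .
  then have ylim2: "y \<longlonglongrightarrow> ub" by (rule LIM_zero_cancel)
  have "(\<lambda>k. Q *v y k) \<longlonglongrightarrow> Q *v ub"
    by (rule isCont_tendsto_compose[OF matrix_vector_mult_linear_continuous_at ylim2])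
  moreover have "Q *v y k = x k" for k unfolding Q_def y_def P_def by (rule QP[OF dpos])
  moreover have "Q *v ub = xbar" unfolding Q_def ub_def P_def by (rule QP[OF dpos])
  ultimately show ?thesis by simp
qed
end
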